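(* Let $a,b \ge 3$ be odd coprime integers. Let $G = \mathbb{D}_8^* \times_{\mathbb{Z}_2} \mathbb{D}_{4a}^* \times \mathbb{Z}_b$, where $\mathbb{D}_8^* \times_{\mathbb{Z}_2} \mathbb{D}_{4a}^*$ is the central product of $\mathbb{D}_8^*$ and $\mathbb{D}_{4a}^*$ obtained from their direct product by identifying their unique central involutions. Then $G$ does not admit a faithful orientation-preserving linear (orthogonal) action on $S^3$, i.e. $G$ is not isomorphic to a subgroup of $\mathrm{SO}(4)$.
   Context: $\mathbb{D}_{4m}^*$ denotes the binary dihedral (generalized quaternion) group of order $4m$, $\langle u,v \mid u^{2m}=1,\ v^2=u^m,\ vuv^{-1}=u^{-1}\rangle$; in particular $\mathbb{D}_8^*$ is the quaternion group of order 8. $\mathbb{Z}_b$ is the cyclic group of order $b$. *)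

theory Defs
  imports "HOL-Analysis.Analysis" "HOL-Algebra.Elementary_Groups" "HOL-Algebra.Coset"
begin

text \<open>Binary dihedral group of order 4m, presented as
  element u^i v^e encoded as pair (i,e), 0 <= i < 2m, e in {0,1}; relations
  u^(2m) = 1, v^2 = u^m, v u v^-1 = u^-1.\<close>
definition bin_dihedral :: "nat \<Rightarrow> (int \<times> int) monoid" where
  "bin_dihedral m =
     \<lparr>carrier = {0..<2 * int m} \<times> {0, 1},
      mult = (\<lambda>(i, e) (j, f).
        if e = 0 then ((i + j) mod (2 * int m), f)
        else if f = 0 then ((i - j) mod (2 * int m), 1)
        else ((i - j + int m) mod (2 * int m), 0)),
      one = (0, 0)\<rparr>"

definition bin_dihedral_z :: "nat \<Rightarrow> int \<times> int" where
  "bin_dihedral_z m = (int m, 0)"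

definition central_prod_bd ::
  "nat \<Rightarrow> nat \<Rightarrow> ((int \<times> int) \<times> (int \<times> int)) set monoid" where
  "central_prod_bd m n =
     (bin_dihedral m \<times>\<times> bin_dihedral n) Mod
       {((0, 0), (0, 0)), (bin_dihedral_z m, bin_dihedral_z n)}"

definition G_ab :: "nat \<Rightarrow> nat \<Rightarrow> (((int \<times> int) \<times> (int \<times> int)) set \<times> int) monoid" where
  "G_ab a b = central_prod_bd 2 a \<times>\<times> integer_mod_group b"

definition SO4 :: "(real^4^4) monoid" where
  "SO4 = \<lparr>carrier = {A. orthogonal_matrix A \<and> det A = 1}, mult = (**), one = mat 1\<rparr>"

end

theory Submission
  imports Defs
begin


lemma mat_mv: "mat k *v (w::real^'n) = k *\<^sub>R w"
  by (metis matrix_scaleR matrix_vector_mul linear_scaleR)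

lemma mm_mv: "(A ** B) *v x = A *v (B *v (x::real^'n))"
  by (simp add: matrix_vector_mul_assoc)

lemma inner_mv: "inner (A *v x) y = inner x (transpose A *v (y::real^'n))"
  by (metis dot_lmul_matrix inner_commute transpose_transpose vector_transpose_matrix)

lemma orth_inner:
  assumes "orthogonal_matrix (A::real^'n^'n)"
  shows "inner (A *v x) (A *v y) = inner x y"
  using assms by (simp add: inner_mv orthogonal_matrix mm_mv[symmetric])

lemma mv_neg: "A *v (- x) = - (A *v (x::real^'n))"
  by (metis matrix_vector_mult_0_right matrix_vector_mult_diff_distrib diff_0)

lemma ortho4_zero:
  fixes v1 v2 v3 v4 w :: "real^4"
  assumes "inner v1 v2 = 0" "inner v1 v3 = 0" "inner v1 v4 = 0"
    "inner v2 v3 = 0" "inner v2 v4 = 0" "inner v3 v4 = 0"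
    "v1 \<noteq> 0" "v2 \<noteq> 0" "v3 \<noteq> 0" "v4 \<noteq> 0"
    "inner w v1 = 0" "inner w v2 = 0" "inner w v3 = 0" "inner w v4 = 0"
  shows "w = 0"
proof (rule ccontr)
  assume w: "w \<noteq> 0"
  let ?S = "{v1, v2, v3, v4, w}"
  have ne: "\<And>x y. inner x y = 0 \<Longrightarrow> x \<noteq> 0 \<Longrightarrow> x \<noteq> y" by auto
  have d: "v1 \<noteq> v2" "v1 \<noteq> v3" "v1 \<noteq> v4" "v2 \<noteq> v3" "v2 \<noteq> v4" "v3 \<noteq> v4"
    "w \<noteq> v1" "w \<noteq> v2" "w \<noteq> v3" "w \<noteq> v4"
    using ne assms w by metis+
  have po: "pairwise orthogonal ?S"
    using assms unfolding pairwise_def orthogonal_def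
    by (auto simp: inner_commute)
  have "0 \<notin> ?S" using assms w by auto
  then have "independent ?S" using po pairwise_orthogonal_independent by blast
  then have "card ?S \<le> DIM(real^4)" using independent_bound by blast
  moreover have "card ?S = 5" using d by auto
  ultimately show False by simp
qed

lemma tr_add: "transpose (A + B) = transpose A + (transpose B :: real^'n^'m)"
  by (simp add: transpose_def vec_eq_iff)
lemma tr_diff: "transpose (A - B) = transpose A - (transpose B :: real^'n^'m)"
  by (simp add: transpose_def vec_eq_iff)
lemma tr_neg: "transpose (- A) = - (transpose A :: real^'n^'m)"
  by (simp add: transpose_def vec_eq_iff)
lemma mm_addl: "(A + B) ** C = A ** C + B ** (C::real^'n^'m)"
  by (simp add: matrix_eq mm_mv matrix_vector_mult_add_rdistrib)
lemma mm_addr: "A ** (B + C) = A ** B + A ** (C::real^'n^'m)"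
  by (simp add: matrix_add_ldistrib)
lemma mm_diffl: "(A - B) ** C = A ** C - B ** (C::real^'n^'m)"
  by (simp add: matrix_eq mm_mv matrix_vector_mult_diff_rdistrib)
lemma mm_diffr: "A ** (B - C) = A ** B - A ** (C::real^'n^'m)"
  by (simp add: matrix_eq mm_mv matrix_vector_mult_diff_distrib matrix_vector_mult_diff_rdistrib)
lemma mm_negl: "(- A) ** C = - (A ** (C::real^'n^'m))"
  using mm_diffl[of 0 A C] by simp
lemma mm_negr: "A ** (- C) = - (A ** (C::real^'n^'m))"
  using mm_diffr[of A 0 C] by simp
lemma sc_mv: "(k *\<^sub>R A) *v x = k *\<^sub>R (A *v (x::real^'n))"
  by (simp add: vec_eq_iff matrix_vector_mult_def sum_distrib_left algebra_simps)
lemma neg_mv: "(- A) *v x = - (A *v (x::real^'n))"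
  by (simp add: vec_eq_iff matrix_vector_mult_def sum_negf)
lemma mat_mm: "mat k ** A = k *\<^sub>R (A::real^'n^'m)"
  by (simp add: matrix_eq mm_mv mat_mv matrix_vector_mult_scaleR scaleR_matrix_vector_assoc)
lemma mm_mat: "A ** mat k = k *\<^sub>R (A::real^'n^'m)"
  by (simp add: matrix_eq mm_mv mat_mv matrix_vector_mult_scaleR scaleR_matrix_vector_assoc)

lemma comm_T:
  assumes o: "orthogonal_matrix (A::real^'n^'n)" and c: "A ** X = X ** A"
  shows "transpose A ** X = X ** transpose A"
proof -
  have o1: "transpose A ** A = mat 1" "A ** transpose A = mat 1"
    using o by (auto simp: orthogonal_matrix_def)
  have "transpose A ** X = transpose A ** X ** (A ** transpose A)" using o1 by simp
  also have "\<dots> = transpose A ** (X ** A) ** transpose A" by (simp add: matrix_mul_assoc)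
  also have "\<dots> = transpose A ** (A ** X) ** transpose A" by (simp add: c)
  also have "\<dots> = (transpose A ** A) ** X ** transpose A" by (simp add: matrix_mul_assoc)
  also have "\<dots> = X ** transpose A" using o1 by simp
  finally show ?thesis .
qed

locale quat =
  fixes I J :: "real^4^4"
  assumes oI: "orthogonal_matrix I" and oJ: "orthogonal_matrix J"
    and JJ: "J ** J = I ** I" and JI: "J ** I = (I ** I) ** (I ** J)"
    and ZZ: "(I ** I) ** (I ** I) = mat 1"
begin

lemma JJv: "J *v (J *v v) = I *v (I *v v)"
  using arg_cong[OF JJ, of "\<lambda>M. M *v v"] by (simp add: mm_mv)
lemma JIv: "J *v (I *v v) = I *v (I *v (I *v (J *v v)))"
  using arg_cong[OF JI, of "\<lambda>M. M *v v"] by (simp add: mm_mv)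
lemma ZZv: "I *v (I *v (I *v (I *v v))) = v"
  using arg_cong[OF ZZ, of "\<lambda>M. M *v v"] by (simp add: mm_mv)

lemma oK: "orthogonal_matrix (I ** J)"
  using oI oJ orthogonal_matrix_mul by blast

lemma KKv:
  assumes yZ: "I *v (I *v y) = - y"
  shows "I *v (J *v (I *v (J *v y))) = - y"
proof -
  have Jy: "J *v (J *v y) = - y" using JJv yZ by simp
  have "J *v (I *v (J *v y)) = I *v (I *v (I *v (J *v (J *v y))))" by (rule JIv)
  also have "\<dots> = I *v y" using Jy yZ by (simp add: mv_neg)
  finally show ?thesis using yZ by simp
qed

lemma orth_facts:
  assumes yZ: "I *v (I *v y) = - y"
  shows "inner y (I *v y) = 0" "inner y (J *v y) = 0" "inner y (I *v (J *v y)) = 0"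
   "inner (I *v y) (J *v y) = 0" "inner (I *v y) (I *v (J *v y)) = 0"
   "inner (J *v y) (I *v (J *v y)) = 0"
proof -
  have Jy: "J *v (J *v y) = - y" using JJv yZ by simp
  have Ky: "I *v (J *v (I *v (J *v y))) = - y" using KKv[OF yZ] .
  show a: "inner y (I *v y) = 0"
    using orth_inner[OF oI, of y "I *v y"] yZ by (simp add: inner_commute)
  show b: "inner y (J *v y) = 0"
    using orth_inner[OF oJ, of y "J *v y"] Jy by (simp add: inner_commute)
  show c: "inner y (I *v (J *v y)) = 0"
    using orth_inner[OF oK, of y "(I ** J) *v y"] Ky by (simp add: inner_commute mm_mv)
  show "inner (I *v y) (J *v y) = 0"
    using orth_inner[OF oI, of "I *v y" "J *v y"] yZ c by simp
  show "inner (I *v y) (I *v (J *v y)) = 0"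
    using orth_inner[OF oI, of y "J *v y"] b by simp
  show "inner (J *v y) (I *v (J *v y)) = 0"
  proof -
    have "J *v (I *v (J *v y)) = I *v y"
    proof -
      have "J *v (I *v (J *v y)) = I *v (I *v (I *v (J *v (J *v y))))" by (rule JIv)
      also have "\<dots> = I *v y" using Jy yZ by (simp add: mv_neg)
      finally show ?thesis .
    qed
    then show ?thesis using orth_inner[OF oJ, of "J *v y" "I *v (J *v y)"] Jy a by simp
  qed
qed

lemma span_y:
  assumes yZ: "I *v (I *v y) = - y" and y: "y \<noteq> 0"
    and w: "inner w y = 0" "inner w (I *v y) = 0" "inner w (J *v y) = 0"
      "inner w (I *v (J *v y)) = 0"
  shows "w = 0"
proof -
  have nz: "I *v y \<noteq> 0" "J *v y \<noteq> 0" "I *v (J *v y) \<noteq> 0"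
    using orth_inner[OF oI, of y y] orth_inner[OF oJ, of y y] orth_inner[OF oK, of y y] y
    by (auto simp: mm_mv)
  show ?thesis using ortho4_zero[OF orth_facts[OF yZ] y nz w] .
qed

lemma Z_neg:
  assumes Z1: "I ** I \<noteq> mat 1"
  shows "I *v (I *v v) = - v"
proof -
  obtain w where w: "I *v (I *v w) \<noteq> w"
    using Z1 unfolding matrix_eq by (auto simp: mm_mv)
  define y where "y = w - I *v (I *v w)"
  have yZ: "I *v (I *v y) = - y"
    unfolding y_def using ZZv[of w] by (simp add: matrix_vector_mult_diff_distrib)
  have y: "y \<noteq> 0" using w y_def by auto
  have key: "inner (I *v (I *v v) + v) u = 0" if uZ: "I *v (I *v u) = - u" for u
  proof -
    have "inner (I *v (I *v v)) u = - inner (I *v (I *v v)) (I *v (I *v u))"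
      using uZ by simp
    also have "\<dots> = - inner v u" using orth_inner[OF oI] by simp
    finally show ?thesis by (simp add: inner_add_left)
  qed
  have Jy: "J *v (J *v y) = - y" using JJv yZ by simp
  have u1: "I *v (I *v (I *v y)) = - (I *v y)" using yZ by (simp add: mv_neg)
  have u2: "I *v (I *v (J *v y)) = - (J *v y)" using JJv[of "J *v y", symmetric] Jy by (simp add: mv_neg)
  have u3: "I *v (I *v (I *v (J *v y))) = - (I *v (J *v y))" using u2 by (simp add: mv_neg)
  have "I *v (I *v v) + v = 0"
    by (rule span_y[OF yZ y key[OF yZ] key[OF u1] key[OF u2] key[OF u3]])
  then show ?thesis by (simp add: eq_neg_iff_add_eq_0)
qed

lemma scalar:
  assumes Zn: "\<And>v. I *v (I *v v) = - v"
    and sym: "transpose M = M" and MI: "M ** I = I ** M" and MJ: "M ** J = J ** M"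
  shows "\<exists>\<alpha>. M = mat \<alpha>"
proof -
  have MIv: "M *v (I *v v) = I *v (M *v v)" for v
    using arg_cong[OF MI, of "\<lambda>X. X *v v"] by (simp add: mm_mv)
  have MJv: "M *v (J *v v) = J *v (M *v v)" for v
    using arg_cong[OF MJ, of "\<lambda>X. X *v v"] by (simp add: mm_mv)
  have Ms: "inner (M *v x) z = inner x (M *v z)" for x z
    using inner_mv[of M x z] sym by simp
  define y :: "real^4" where "y = axis 1 1"
  have y: "y \<noteq> 0" by (simp add: y_def)
  have yZ: "I *v (I *v y) = - y" by (rule Zn)
  have KK: "I *v (J *v (I *v (J *v x))) = - x" for x by (rule KKv[OF Zn])
  note of = orth_facts[OF yZ]
  have p1: "inner (M *v y) (I *v y) = 0"
  proof -
    have "inner (M *v y) (I *v y) = inner y (I *v (M *v y))" using Ms MIv by simp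
    also have "\<dots> = inner (I *v y) (I *v (I *v (M *v y)))" using orth_inner[OF oI] by simp
    also have "\<dots> = - inner (M *v y) (I *v y)" using Zn by (simp add: inner_commute)
    finally show ?thesis by simp
  qed
  have p2: "inner (M *v y) (J *v y) = 0"
  proof -
    have "inner (M *v y) (J *v y) = inner y (J *v (M *v y))" using Ms MJv by simp
    also have "\<dots> = inner (J *v y) (J *v (J *v (M *v y)))" using orth_inner[OF oJ] by simp
    also have "\<dots> = - inner (M *v y) (J *v y)" using Zn JJv by (simp add: inner_commute)
    finally show ?thesis by simp
  qed
  have p3: "inner (M *v y) (I *v (J *v y)) = 0"
  proof -
    have "inner (M *v y) (I *v (J *v y)) = inner y (I *v (J *v (M *v y)))" using Ms MJv MIv by simp
    also have "\<dots> = inner ((I ** J) *v y) ((I ** J) *v ((I ** J) *v (M *v y)))"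
      using orth_inner[OF oK] by (simp add: mm_mv)
    also have "\<dots> = - inner (M *v y) (I *v (J *v y))" using KK by (simp add: inner_commute mm_mv)
    finally show ?thesis by simp
  qed
  define \<alpha> where "\<alpha> = inner (M *v y) y / inner y y"
  have yy: "inner y y \<noteq> 0" using y by simp
  have My: "M *v y = \<alpha> *\<^sub>R y"
  proof -
    have "M *v y - \<alpha> *\<^sub>R y = 0"
      apply (rule span_y[OF yZ y])
      using p1 p2 p3 of yy by (simp_all add: \<alpha>_def inner_diff_left)
    then show ?thesis by simp
  qed
  have Mu: "M *v y = \<alpha> *\<^sub>R y" "M *v (I *v y) = \<alpha> *\<^sub>R (I *v y)"
    "M *v (J *v y) = \<alpha> *\<^sub>R (J *v y)" "M *v (I *v (J *v y)) = \<alpha> *\<^sub>R (I *v (J *v y))"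
    using My MIv MJv by (simp_all add: matrix_vector_mult_scaleR)
  have "M *v w = mat \<alpha> *v w" for w
  proof -
    have "M *v w - \<alpha> *\<^sub>R w = 0"
      apply (rule span_y[OF yZ y])
      using Mu by (auto simp: inner_diff_left Ms)
    then show ?thesis by (simp add: mat_mv)
  qed
  then show ?thesis unfolding matrix_eq by blast
qed


lemma decompose:
  assumes Zn: "\<And>v. I *v (I *v v) = - v"
    and oX: "orthogonal_matrix X" and XI: "X ** I = I ** X" and XJ: "X ** J = J ** X"
    and Dt: "transpose D = - D" and DI: "D ** I = I ** D" and DJ: "D ** J = J ** D"
    and DX: "D ** X = X ** D" and DTX: "D ** transpose X = transpose X ** D"
    and DD: "D ** D = mat \<sigma>" and s0: "\<sigma> \<noteq> 0"
  shows "\<exists>a p. X = mat a + p *\<^sub>R D"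
proof -
  let ?T = "transpose X"
  have TI: "?T ** I = I ** ?T" using comm_T[OF oX XI] .
  have TJ: "?T ** J = J ** ?T" using comm_T[OF oX XJ] .
  obtain \<alpha> where S: "X + ?T = mat \<alpha>"
  proof -
    have "\<exists>\<alpha>. X + ?T = mat \<alpha>"
      by (rule scalar[OF Zn]) (simp_all add: tr_add add.commute mm_addl mm_addr XI XJ TI TJ)
    then show ?thesis using that by blast
  qed
  define P where "P = X - ?T"
  have PI: "P ** I = I ** P" and PJ: "P ** J = J ** P"
    by (simp_all add: P_def mm_diffl mm_diffr XI XJ TI TJ)
  have PD: "D ** P = P ** D" by (simp add: P_def mm_diffl mm_diffr DX DTX)
  obtain \<mu> where Pm: "P ** D = mat \<mu>"
  proof -
    have "\<exists>\<mu>. P ** D = mat \<mu>"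
    proof (rule scalar[OF Zn])
      show "transpose (P ** D) = P ** D"
      proof -
        have tP: "transpose P = - P" by (simp add: P_def tr_diff)
        show ?thesis by (simp add: matrix_transpose_mul Dt tP mm_negl mm_negr PD)
      qed
      show "P ** D ** I = I ** (P ** D)"
        by (metis DI PI matrix_mul_assoc)
      show "P ** D ** J = J ** (P ** D)"
        by (metis DJ PJ matrix_mul_assoc)
    qed
    then show ?thesis using that by blast
  qed
  have "\<sigma> *\<^sub>R P = \<mu> *\<^sub>R D"
  proof -
    have "\<sigma> *\<^sub>R P = P ** (D ** D)" by (simp add: DD mm_mat)
    also have "\<dots> = (P ** D) ** D" by (simp add: matrix_mul_assoc)
    also have "\<dots> = \<mu> *\<^sub>R D" by (simp add: Pm mat_mm)
    finally show ?thesis .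
  qed
  then have P: "P = (\<mu> / \<sigma>) *\<^sub>R D" using s0
    by (metis (no_types, lifting) divide_inverse_commute scaleR_scaleR inverse_eq_divide
        mult.commute right_inverse scaleR_one)
  have "X = (1/2) *\<^sub>R ((X + ?T) + P)" by (simp add: P_def scaleR_add_right[symmetric])
  also have "\<dots> = mat (\<alpha>/2) + (\<mu> / \<sigma> / 2) *\<^sub>R D"
    by (simp add: S P vec_eq_iff mat_def)
  finally show ?thesis by blast
qed

lemma comm_form:
  "(mat a + p *\<^sub>R D) ** (mat c + q *\<^sub>R D) = (mat c + q *\<^sub>R D) ** (mat a + (p::real) *\<^sub>R (D::real^4^4))"
  by (simp add: matrix_eq mm_mv mat_mv matrix_vector_mult_add_rdistrib matrix_vector_right_distrib
      matrix_vector_mult_scaleR sc_mv algebra_simps)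


lemma final:
  assumes Z1: "I ** I \<noteq> mat 1"
    and oC: "orthogonal_matrix C" and oU: "orthogonal_matrix U" and oV: "orthogonal_matrix V"
    and CI: "C ** I = I ** C" and CJ: "C ** J = J ** C"
    and UI: "U ** I = I ** U" and UJ: "U ** J = J ** U"
    and VI: "V ** I = I ** V" and VJ: "V ** J = J ** V"
    and CU: "C ** U = U ** C" and CV: "C ** V = V ** C"
    and CC: "C ** C \<noteq> mat 1"
  shows "U ** V = V ** U"
proof -
  have Zn: "\<And>v. I *v (I *v v) = - v" using Z_neg[OF Z1] .
  let ?T = "transpose C"
  have TI: "?T ** I = I ** ?T" using comm_T[OF oC CI] .
  have TJ: "?T ** J = J ** ?T" using comm_T[OF oC CJ] .
  define D where "D = C - ?T"
  have Dt: "transpose D = - D" by (simp add: D_def tr_diff)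
  have DI: "D ** I = I ** D" and DJ: "D ** J = J ** D"
    by (simp_all add: D_def mm_diffl mm_diffr CI CJ TI TJ)
  obtain \<sigma> where DD: "D ** D = mat \<sigma>"
  proof -
    have "\<exists>\<sigma>. D ** D = mat \<sigma>"
    proof (rule scalar[OF Zn])
      show "transpose (D ** D) = D ** D"
        by (simp add: matrix_transpose_mul Dt mm_negl mm_negr)
      show "D ** D ** I = I ** (D ** D)" by (metis DI matrix_mul_assoc)
      show "D ** D ** J = J ** (D ** D)" by (metis DJ matrix_mul_assoc)
    qed
    then show ?thesis using that by blast
  qed
  have s0: "\<sigma> \<noteq> 0"
  proof
    assume "\<sigma> = 0"
    then have DD0: "D *v (D *v x) = 0" for x
      using arg_cong[OF DD, of "\<lambda>M. M *v x"] by (simp add: mm_mv mat_mv)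
    have "D *v x = 0" for x
    proof -
      have "inner (D *v x) (D *v x) = inner x (transpose D *v (D *v x))" by (rule inner_mv)
      also have "\<dots> = 0" using DD0 by (simp add: Dt neg_mv)
      finally show ?thesis by simp
    qed
    then have "D = 0" by (simp add: matrix_eq)
    then have "C = ?T" by (simp add: D_def)
    then have "C ** C = mat 1" using oC by (metis orthogonal_matrix_def)
    with CC show False by simp
  qed
  have gen: "\<exists>a p. X = mat a + p *\<^sub>R D"
    if oX: "orthogonal_matrix X" and XI: "X ** I = I ** X" and XJ: "X ** J = J ** X"
      and CX: "C ** X = X ** C" for X
  proof (rule decompose[OF Zn oX XI XJ Dt DI DJ _ _ DD s0])
    have TX: "?T ** X = X ** ?T" using comm_T[OF oC CX] .
    show "D ** X = X ** D" by (simp add: D_def mm_diffl mm_diffr CX TX)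
    have XT: "transpose X ** C = C ** transpose X" using comm_T[OF oX CX[symmetric]] .
    have TT: "?T ** transpose X = transpose X ** ?T"
      by (metis CX matrix_transpose_mul)
    show "D ** transpose X = transpose X ** D" by (simp add: D_def mm_diffl mm_diffr XT TT)
  qed
  obtain a p where U: "U = mat a + p *\<^sub>R D" using gen[OF oU UI UJ CU] by blast
  obtain c q where V: "V = mat c + q *\<^sub>R D" using gen[OF oV VI VJ CV] by blast
  show ?thesis unfolding U V by (rule comm_form)
qed

end


lemma bd_mult: "(i, e) \<otimes>\<^bsub>bin_dihedral m\<^esub> (j, f) =
  (if e = 0 then ((i + j) mod (2 * int m), f)
   else if f = 0 then ((i - j) mod (2 * int m), 1)
   else ((i - j + int m) mod (2 * int m), 0))"
  by (simp add: bin_dihedral_def)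

lemma bd_carrier: "carrier (bin_dihedral m) = {0..<2 * int m} \<times> {0, 1}"
  by (simp add: bin_dihedral_def)

lemma mod_range: "- n \<le> x \<Longrightarrow> x < 2 * n \<Longrightarrow> (x::int) mod n = (if x < 0 then x + n else if x < n then x else x - n)"
proof -
  assume h: "- n \<le> x" "x < 2 * n"
  show ?thesis
  proof (cases "x < 0")
    case True then have "(x + n) mod n = x + n" using h by (intro mod_pos_pos_trivial) auto
    then show ?thesis using True by simp
  next
    case False
    show ?thesis
    proof (cases "x < n")
      case True then show ?thesis using False by simp
    next
      case F2: False then have "(x - n) mod n = x - n" using h by (intro mod_pos_pos_trivial) auto
      then show ?thesis using False F2 by (simp add: mod_diff_right_eq[symmetric])
    qed
  qed
qed

lemma mr2: "- (2 * int m) \<le> x \<Longrightarrow> x < 4 * int m \<Longrightarrow> x mod (2 * int m) = (if x < 0 then x + 2 * int m else if x < 2 * int m then x else x - 2 * int m)"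
  using mod_range[of "2 * int m" x] by simp

lemma bd_closed: "m > 0 \<Longrightarrow> p \<in> carrier (bin_dihedral m) \<Longrightarrow> q \<in> carrier (bin_dihedral m) \<Longrightarrow>
  p \<otimes>\<^bsub>bin_dihedral m\<^esub> q \<in> carrier (bin_dihedral m)"
  by (cases p; cases q) (auto simp: bd_mult bd_carrier)

lemma bd_one: "p \<in> carrier (bin_dihedral m) \<Longrightarrow> (0, 0) \<otimes>\<^bsub>bin_dihedral m\<^esub> p = p"
  by (cases p) (auto simp: bd_mult bd_carrier)

lemma bd_z1: "p \<in> carrier (bin_dihedral m) \<Longrightarrow> q \<in> carrier (bin_dihedral m) \<Longrightarrow>
  ((int m, 0) \<otimes>\<^bsub>bin_dihedral m\<^esub> p) \<otimes>\<^bsub>bin_dihedral m\<^esub> q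
   = (int m, 0) \<otimes>\<^bsub>bin_dihedral m\<^esub> (p \<otimes>\<^bsub>bin_dihedral m\<^esub> q)"
  by (cases p; cases q) (auto simp: bd_mult bd_carrier mr2)

lemma bd_z2: "p \<in> carrier (bin_dihedral m) \<Longrightarrow> q \<in> carrier (bin_dihedral m) \<Longrightarrow>
  p \<otimes>\<^bsub>bin_dihedral m\<^esub> ((int m, 0) \<otimes>\<^bsub>bin_dihedral m\<^esub> q)
   = (int m, 0) \<otimes>\<^bsub>bin_dihedral m\<^esub> (p \<otimes>\<^bsub>bin_dihedral m\<^esub> q)"
  by (cases p; cases q) (auto simp: bd_mult bd_carrier mr2)

lemma bd_z3: "p \<in> carrier (bin_dihedral m) \<Longrightarrow> q \<in> carrier (bin_dihedral m) \<Longrightarrow>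
  ((int m, 0) \<otimes>\<^bsub>bin_dihedral m\<^esub> p) \<otimes>\<^bsub>bin_dihedral m\<^esub> ((int m, 0) \<otimes>\<^bsub>bin_dihedral m\<^esub> q)
   = p \<otimes>\<^bsub>bin_dihedral m\<^esub> q"
  by (cases p; cases q) (auto simp: bd_mult bd_carrier mr2)

abbreviation Pr :: "nat \<Rightarrow> ((int \<times> int) \<times> (int \<times> int)) monoid" where
  "Pr a \<equiv> bin_dihedral 2 \<times>\<times> bin_dihedral a"

abbreviation NN :: "nat \<Rightarrow> ((int \<times> int) \<times> (int \<times> int)) set" where
  "NN a \<equiv> {((0, 0), (0, 0)), (bin_dihedral_z 2, bin_dihedral_z a)}"

lemma pr_mult: "(x1, x2) \<otimes>\<^bsub>Pr a\<^esub> (y1, y2) = (x1 \<otimes>\<^bsub>bin_dihedral 2\<^esub> y1, x2 \<otimes>\<^bsub>bin_dihedral a\<^esub> y2)"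
  by (simp add: DirProd_def)

lemma pr_carrier: "carrier (Pr a) = carrier (bin_dihedral 2) \<times> carrier (bin_dihedral a)"
  by (simp add: DirProd_def)

lemma pr_closed: "a > 0 \<Longrightarrow> x \<in> carrier (Pr a) \<Longrightarrow> y \<in> carrier (Pr a) \<Longrightarrow> x \<otimes>\<^bsub>Pr a\<^esub> y \<in> carrier (Pr a)"
  by (cases x; cases y) (auto simp: pr_mult pr_carrier intro: bd_closed)

lemma coset_eq: "x \<in> carrier (Pr a) \<Longrightarrow>
  NN a #>\<^bsub>Pr a\<^esub> x = {x, (bin_dihedral_z 2, bin_dihedral_z a) \<otimes>\<^bsub>Pr a\<^esub> x}"
  by (cases x) (auto simp: r_coset_def pr_mult pr_carrier bd_one)

lemma coset_mult:
  assumes a: "a > 0" and x: "x \<in> carrier (Pr a)" and y: "y \<in> carrier (Pr a)"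
  shows "set_mult (Pr a) (NN a #>\<^bsub>Pr a\<^esub> x) (NN a #>\<^bsub>Pr a\<^esub> y) = NN a #>\<^bsub>Pr a\<^esub> (x \<otimes>\<^bsub>Pr a\<^esub> y)"
proof -
  obtain x1 x2 y1 y2 where xy: "x = (x1, x2)" "y = (y1, y2)" by (cases x, cases y)
  have c: "x1 \<in> carrier (bin_dihedral 2)" "x2 \<in> carrier (bin_dihedral a)"
     "y1 \<in> carrier (bin_dihedral 2)" "y2 \<in> carrier (bin_dihedral a)"
    using x y xy by (auto simp: pr_carrier)
  have xyc: "x \<otimes>\<^bsub>Pr a\<^esub> y \<in> carrier (Pr a)" using pr_closed[OF a x y] .
  show ?thesis
    unfolding coset_eq[OF x] coset_eq[OF y] coset_eq[OF xyc] set_mult_def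
    using c bd_z1[of x1 2 y1] bd_z2[of x1 2 y1] bd_z3[of x1 2 y1]
      bd_z1[of x2 a y2] bd_z2[of x2 a y2] bd_z3[of x2 a y2]
    by (auto simp: xy pr_mult bin_dihedral_z_def)
qed

lemma G_mult: "b \<noteq> 0 \<Longrightarrow> (A, k) \<otimes>\<^bsub>G_ab a b\<^esub> (B, l) = (set_mult (Pr a) A B, (k + l) mod int b)"
  by (simp add: G_ab_def central_prod_bd_def DirProd_def integer_mod_group_def FactGroup_def)

lemma G_carrier: "b \<noteq> 0 \<Longrightarrow> carrier (G_ab a b) = (rcosets\<^bsub>Pr a\<^esub> (NN a)) \<times> {0..<int b}"
  by (simp add: G_ab_def central_prod_bd_def DirProd_def integer_mod_group_def FactGroup_def)

definition el :: "nat \<Rightarrow> (int \<times> int) \<times> (int \<times> int) \<Rightarrow> int \<Rightarrow> ((int \<times> int) \<times> (int \<times> int)) set \<times> int" where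
  "el a x k = (NN a #>\<^bsub>Pr a\<^esub> x, k)"

lemma el_carrier: "b \<noteq> 0 \<Longrightarrow> x \<in> carrier (Pr a) \<Longrightarrow> 0 \<le> k \<Longrightarrow> k < int b \<Longrightarrow> el a x k \<in> carrier (G_ab a b)"
  by (auto simp: G_carrier el_def RCOSETS_def)

lemma el_mult: "a > 0 \<Longrightarrow> b \<noteq> 0 \<Longrightarrow> x \<in> carrier (Pr a) \<Longrightarrow> y \<in> carrier (Pr a) \<Longrightarrow>
  el a x k \<otimes>\<^bsub>G_ab a b\<^esub> el a y l = el a (x \<otimes>\<^bsub>Pr a\<^esub> y) ((k + l) mod int b)"
  by (simp add: el_def G_mult coset_mult)

lemma orth_idem:
  assumes "orthogonal_matrix (A::real^'n^'n)" and "A ** A = A"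
  shows "A = mat 1"
proof -
  have "A = (transpose A ** A) ** A" using assms(1) by (simp add: orthogonal_matrix_def)
  also have "\<dots> = transpose A ** (A ** A)" by (simp add: matrix_mul_assoc)
  also have "\<dots> = mat 1" using assms by (simp add: orthogonal_matrix_def)
  finally show ?thesis .
qed

theorem mainTheorem6:
  fixes a b :: nat
  assumes "odd a" and "odd b" and "a \<ge> 3" and "b \<ge> 3" and "coprime a b"
  shows "\<not> (\<exists>H. subgroup H SO4 \<and> G_ab a b \<cong> SO4\<lparr>carrier := H\<rparr>)"
proof
  assume "\<exists>H. subgroup H SO4 \<and> G_ab a b \<cong> SO4\<lparr>carrier := H\<rparr>"
  then obtain H \<phi> where sg: "subgroup H SO4" and iso: "\<phi> \<in> iso (G_ab a b) (SO4\<lparr>carrier := H\<rparr>)"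
    by (auto simp: is_iso_def)
  have a0: "a > 0" and b0: "b \<noteq> 0" using assms by auto
  have hom: "\<And>x y. x \<in> carrier (G_ab a b) \<Longrightarrow> y \<in> carrier (G_ab a b) \<Longrightarrow>
      \<phi> (x \<otimes>\<^bsub>G_ab a b\<^esub> y) = \<phi> x ** \<phi> y"
    using iso by (auto simp: iso_def hom_def SO4_def)
  have inj: "inj_on \<phi> (carrier (G_ab a b))" using iso by (auto simp: iso_def bij_betw_def)
  have orth: "\<And>x. x \<in> carrier (G_ab a b) \<Longrightarrow> orthogonal_matrix (\<phi> x)"
  proof -
    fix x assume "x \<in> carrier (G_ab a b)"
    then have "\<phi> x \<in> H" using iso by (auto simp: iso_def hom_def)
    then have "\<phi> x \<in> carrier SO4" using subgroup.subset[OF sg] by blast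
    then show "orthogonal_matrix (\<phi> x)" by (simp add: SO4_def)
  qed
  define M where "M x k = \<phi> (el a x k)" for x k
  have Mmul: "M x k ** M y l = M (x \<otimes>\<^bsub>Pr a\<^esub> y) ((k + l) mod int b)"
    if "x \<in> carrier (Pr a)" "y \<in> carrier (Pr a)" "0 \<le> k" "k < int b" "0 \<le> l" "l < int b" for x y k l
    using that hom[of "el a x k" "el a y l"] el_carrier[OF b0] el_mult[OF a0 b0] unfolding M_def
    by simp
  have Minj: "el a x k = el a y l"
    if "M x k = M y l" "x \<in> carrier (Pr a)" "y \<in> carrier (Pr a)" "0 \<le> k" "k < int b" "0 \<le> l" "l < int b" for x y k l
    using that inj el_carrier[OF b0] unfolding M_def inj_on_def by blast
  have Morth: "orthogonal_matrix (M x k)"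
    if "x \<in> carrier (Pr a)" "0 \<le> k" "k < int b" for x k
    using that orth el_carrier[OF b0] unfolding M_def by blast
  define o0 :: "(int \<times> int) \<times> (int \<times> int)" where "o0 = ((0, 0), (0, 0))"
  define i0 :: "(int \<times> int) \<times> (int \<times> int)" where "i0 = ((1, 0), (0, 0))"
  define j0 :: "(int \<times> int) \<times> (int \<times> int)" where "j0 = ((0, 1), (0, 0))"
  define z0 :: "(int \<times> int) \<times> (int \<times> int)" where "z0 = ((2, 0), (0, 0))"
  define u0 :: "(int \<times> int) \<times> (int \<times> int)" where "u0 = ((0, 0), (1, 0))"
  define v0 :: "(int \<times> int) \<times> (int \<times> int)" where "v0 = ((0, 0), (0, 1))"
  have cars: "o0 \<in> carrier (Pr a)" "i0 \<in> carrier (Pr a)" "j0 \<in> carrier (Pr a)" "z0 \<in> carrier (Pr a)"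
    "u0 \<in> carrier (Pr a)" "v0 \<in> carrier (Pr a)"
    using assms by (auto simp: o0_def i0_def j0_def z0_def u0_def v0_def pr_carrier bd_carrier)
  have b1: "(0::int) < int b" "(1::int) < int b" using assms by auto
  have m1: "1 mod int b = 1" "2 mod int b = 2" using assms by auto
  define I where "I = M i0 0"
  define J where "J = M j0 0"
  define C where "C = M o0 1"
  define U where "U = M u0 0"
  define V where "V = M v0 0"
  define Z where "Z = M z0 0"
  have one: "M o0 0 = mat 1"
  proof (rule orth_idem)
    show "orthogonal_matrix (M o0 0)" using Morth cars b1 by simp
    have "o0 \<otimes>\<^bsub>Pr a\<^esub> o0 = o0" by (simp add: o0_def pr_mult bd_mult)
    then show "M o0 0 ** M o0 0 = M o0 0" using Mmul[of o0 o0 0 0] cars b1 by simp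
  qed
  have II: "I ** I = Z"
  proof -
    have "i0 \<otimes>\<^bsub>Pr a\<^esub> i0 = z0" by (simp add: i0_def z0_def pr_mult bd_mult)
    then show ?thesis using Mmul[of i0 i0 0 0] cars b1 unfolding I_def Z_def by simp
  qed
  have JJ: "J ** J = I ** I"
  proof -
    have "j0 \<otimes>\<^bsub>Pr a\<^esub> j0 = z0" by (simp add: j0_def z0_def pr_mult bd_mult)
    then show ?thesis using Mmul[of j0 j0 0 0] cars b1 II unfolding J_def Z_def by simp
  qed
  have JI: "J ** I = (I ** I) ** (I ** J)"
  proof -
    have e1: "j0 \<otimes>\<^bsub>Pr a\<^esub> i0 = ((3, 1), (0, 0))" by (simp add: j0_def i0_def pr_mult bd_mult)
    have e2: "i0 \<otimes>\<^bsub>Pr a\<^esub> j0 = ((1, 1), (0, 0))" by (simp add: j0_def i0_def pr_mult bd_mult)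
    have e3: "z0 \<otimes>\<^bsub>Pr a\<^esub> ((1, 1), (0, 0)) = ((3, 1), (0, 0))" by (simp add: z0_def pr_mult bd_mult)
    have c2: "((1::int, 1::int), (0::int, 0::int)) \<in> carrier (Pr a)" using a0 by (simp add: pr_carrier bd_carrier)
    show ?thesis using Mmul[of j0 i0 0 0] Mmul[of i0 j0 0 0] Mmul[of z0 "((1, 1), (0, 0))" 0 0]
      cars b1 II e1 e2 e3 c2 unfolding I_def J_def Z_def by simp
  qed
  have ZZ: "(I ** I) ** (I ** I) = mat 1"
  proof -
    have "z0 \<otimes>\<^bsub>Pr a\<^esub> z0 = o0" by (simp add: z0_def o0_def pr_mult bd_mult)
    then show ?thesis using Mmul[of z0 z0 0 0] cars b1 II one unfolding Z_def by simp
  qed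
  have amod: "int a mod (2 * int a) = int a" using a0 by simp
  have Z1: "I ** I \<noteq> mat 1"
  proof
    assume "I ** I = mat 1"
    then have "M z0 0 = M o0 0" using II one unfolding Z_def by simp
    then have e: "el a z0 0 = el a o0 0"
      by (rule Minj) (use cars b1 in auto)
    have "z0 \<in> NN a #>\<^bsub>Pr a\<^esub> z0" by (simp only: coset_eq[OF cars(4)]) simp
    then have "z0 \<in> NN a #>\<^bsub>Pr a\<^esub> o0" using e by (simp add: el_def)
    moreover have wo: "(bin_dihedral_z 2, bin_dihedral_z a) \<otimes>\<^bsub>Pr a\<^esub> o0 = (bin_dihedral_z 2, bin_dihedral_z a)"
      using amod by (simp add: o0_def pr_mult bd_mult bin_dihedral_z_def)
    have "NN a #>\<^bsub>Pr a\<^esub> o0 = NN a" unfolding coset_eq[OF cars(1)] wo by (simp add: o0_def)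
    ultimately have "z0 \<in> NN a" by simp
    then show False using a0 by (auto simp: z0_def bin_dihedral_z_def)
  qed
  have comm: "M x k ** M y l = M y l ** M x k"
    if "x \<otimes>\<^bsub>Pr a\<^esub> y = y \<otimes>\<^bsub>Pr a\<^esub> x" "x \<in> carrier (Pr a)" "y \<in> carrier (Pr a)"
       "0 \<le> k" "k < int b" "0 \<le> l" "l < int b" for x y k l
    using that Mmul[of x y k l] Mmul[of y x l k] by (simp add: add.commute)
  have CI: "C ** I = I ** C" unfolding C_def I_def
    by (rule comm) (use cars b1 in \<open>simp_all add: o0_def i0_def pr_mult bd_mult\<close>)
  have CJ: "C ** J = J ** C" unfolding C_def J_def
    by (rule comm) (use cars b1 in \<open>simp_all add: o0_def j0_def pr_mult bd_mult\<close>)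
  have CU: "C ** U = U ** C" unfolding C_def U_def
    by (rule comm) (use cars b1 in \<open>simp_all add: o0_def u0_def pr_mult bd_mult\<close>)
  have CV: "C ** V = V ** C" unfolding C_def V_def
    by (rule comm) (use cars b1 in \<open>simp_all add: o0_def v0_def pr_mult bd_mult\<close>)
  have UI: "U ** I = I ** U" unfolding U_def I_def
    by (rule comm) (use cars b1 in \<open>simp_all add: u0_def i0_def pr_mult bd_mult\<close>)
  have UJ: "U ** J = J ** U" unfolding U_def J_def
    by (rule comm) (use cars b1 in \<open>simp_all add: u0_def j0_def pr_mult bd_mult\<close>)
  have VI: "V ** I = I ** V" unfolding V_def I_def
    by (rule comm) (use cars b1 in \<open>simp_all add: v0_def i0_def pr_mult bd_mult\<close>)
  have VJ: "V ** J = J ** V" unfolding V_def J_def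
    by (rule comm) (use cars b1 in \<open>simp_all add: v0_def j0_def pr_mult bd_mult\<close>)
  have CC: "C ** C \<noteq> mat 1"
  proof
    assume CC1: "C ** C = mat 1"
    have oo: "o0 \<otimes>\<^bsub>Pr a\<^esub> o0 = o0" by (simp add: o0_def pr_mult bd_mult)
    have "C ** C = M o0 2"
      using Mmul[of o0 o0 1 1] cars(1) b1 oo m1 unfolding C_def by simp
    then have "M o0 2 = M o0 0" using CC1 one by simp
    then have "el a o0 2 = el a o0 0"
      by (rule Minj) (use cars b1 assms in auto)
    then show False by (simp add: el_def)
  qed
  have oI: "orthogonal_matrix I" and oJ: "orthogonal_matrix J" and oC: "orthogonal_matrix C"
    and oU: "orthogonal_matrix U" and oV: "orthogonal_matrix V"
    unfolding I_def J_def C_def U_def V_def using Morth cars b1 by auto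
  interpret quat I J using oI oJ JJ JI ZZ by unfold_locales
  have UV: "U ** V = V ** U" using final[OF Z1 oC oU oV CI CJ UI UJ VI VJ CU CV CC] .
  have m2: "1 mod (2 * int a) = 1" "(-1) mod (2 * int a) = 2 * int a - 1" using assms by (auto simp: mr2)
  define w1 where "w1 = u0 \<otimes>\<^bsub>Pr a\<^esub> v0"
  define w2 where "w2 = v0 \<otimes>\<^bsub>Pr a\<^esub> u0"
  have w12: "w1 = ((0, 0), (1, 1))" "w2 = ((0, 0), (2 * int a - 1, 1))"
    unfolding w1_def w2_def using m2 by (simp_all add: u0_def v0_def pr_mult bd_mult)
  have wc: "w1 \<in> carrier (Pr a)" "w2 \<in> carrier (Pr a)"
    unfolding w1_def w2_def using pr_closed[OF a0] cars by auto
  have "M w1 0 = M w2 0" using UV Mmul[of u0 v0 0 0] Mmul[of v0 u0 0 0] cars b1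
    unfolding U_def V_def w1_def w2_def by simp
  then have "el a w2 0 = el a w1 0"
    by (rule Minj[OF sym]) (use wc b1 in auto)
  moreover have "w2 \<in> NN a #>\<^bsub>Pr a\<^esub> w2" by (simp only: coset_eq[OF wc(2)]) simp
  ultimately have "w2 \<in> NN a #>\<^bsub>Pr a\<^esub> w1" by (simp add: el_def)
  then have "w2 \<in> {w1, (bin_dihedral_z 2, bin_dihedral_z a) \<otimes>\<^bsub>Pr a\<^esub> w1}"
    by (simp only: coset_eq[OF wc(1)])
  then show False using assms
    by (simp add: w12 pr_mult bd_mult bin_dihedral_z_def)
qed

end
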